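(* There are two positive $C^\infty$ functions $\psi_1,\psi_2$ on $\mathbb{R}$, solutions of $L_0(\psi)=0$, such that: (1) $\psi_1(-v)=\psi_2(v)>0$ for all $v\in\mathbb{R}$; (2) $\{\psi_1,\psi_2\}$ is a basis of solutions of $L_0(\psi)=0$, and the Wronskian satisfies $\psi_1\psi_2'-\psi_1'\psi_2=1$ on $\mathbb{R}$; (3) for some $v_0>0$ large enough and positive constants $c_1,c_2$, $$\psi_1(v)\lesssim |v|^{-\gamma}\ (v\geqslant v_0),\qquad \psi_1(v)\lesssim|v|^{1+\gamma}\ (v\leqslant -v_0),$$ $$\psi_1(v)\sim c_1|v|^{-\gamma}\text{ at }+\infty,\qquad \psi_1(v)\sim c_2|v|^{1+\gamma}\text{ at }-\infty,$$ and correspondingly $$\psi_2(v)\lesssim |v|^{\gamma+1}\ (v\geqslant v_0),\qquad \psi_2(v)\lesssim|v|^{-\gamma}\ (v\leqslant -v_0),$$ $$\psi_2(v)\sim c_2|v|^{1+\gamma}\text{ at }+\infty,\qquad \psi_2(v)\sim c_1|v|^{-\gamma}\text{ at }-\infty.$$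
   Context: Fix $\gamma>1/2$. Let $\tilde W(v)=\frac{\gamma(\gamma+1)}{1+v^2}$ and $L_0(\psi)=-\psi''+\tilde W\psi$ on $\mathbb{R}$. The symbol $A\lesssim B$ means $A\leqslant CB$ for a constant $C>0$ independent of $v$. *)

theory Defs
  imports "HOL-Analysis.Analysis" "HOL-Library.Landau_Symbols"
begin

definition Wt :: "real \<Rightarrow> real \<Rightarrow> real" where
  "Wt \<gamma> v = \<gamma> * (\<gamma> + 1) / (1 + v\<^sup>2)"

definition L0 :: "real \<Rightarrow> (real \<Rightarrow> real) \<Rightarrow> real \<Rightarrow> real" where
  "L0 \<gamma> \<psi> v = - deriv (deriv \<psi>) v + Wt \<gamma> v * \<psi> v"

definition L0_solution :: "real \<Rightarrow> (real \<Rightarrow> real) \<Rightarrow> bool" where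
  "L0_solution \<gamma> \<psi> \<longleftrightarrow>
     (\<forall>v. \<psi> differentiable (at v)) \<and> (\<forall>v. deriv \<psi> differentiable (at v)) \<and>
     (\<forall>v. L0 \<gamma> \<psi> v = 0)"

definition smooth_real :: "(real \<Rightarrow> real) \<Rightarrow> bool" where
  "smooth_real f \<longleftrightarrow> (\<forall>k v. ((deriv ^^ k) f) differentiable (at v))"

end

theory Submission
  imports Defs
begin

definition Ck :: "nat \<Rightarrow> (real \<Rightarrow> real) \<Rightarrow> bool" where
  "Ck n f \<longleftrightarrow> (\<forall>j<n. \<forall>v. ((deriv ^^ j) f) differentiable (at v))"

lemma Ck_0[simp]: "Ck 0 f" by (simp add: Ck_def)

lemma Ck_Suc: "Ck (Suc n) f \<longleftrightarrow> (\<forall>v. f differentiable (at v)) \<and> Ck n (deriv f)"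
proof -
  have e: "(deriv ^^ Suc j) f = (deriv ^^ j) (deriv f)" for j
    by (simp add: funpow_Suc_right del: funpow.simps)
  show ?thesis unfolding Ck_def
  proof safe
    fix j v assume "\<forall>j<Suc n. \<forall>v. (deriv ^^ j) f differentiable at v" "j < n"
    then show "(deriv ^^ j) (deriv f) differentiable at v" using e[of j] by (metis Suc_mono)
  next
    fix v assume "\<forall>j<Suc n. \<forall>v. (deriv ^^ j) f differentiable at v"
    then show "f differentiable at v" by (metis funpow_0 zero_less_Suc)
  next
    fix j v assume "\<forall>v. f differentiable at v" "\<forall>j<n. \<forall>v. (deriv ^^ j) (deriv f) differentiable at v" "j < Suc n"
    then show "(deriv ^^ j) f differentiable at v" using e by (cases j) auto
  qed
qed

lemma Ck_mono: "Ck (Suc n) f \<Longrightarrow> Ck n f"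
  by (simp add: Ck_def)

lemma smooth_Ck: "smooth_real f \<longleftrightarrow> (\<forall>n. Ck n f)"
  unfolding smooth_real_def Ck_def by (metis lessI)

lemma rdiff_deriv: "f differentiable (at v) \<Longrightarrow> (f has_real_derivative deriv f v) (at v)"
  using DERIV_deriv_iff_real_differentiable by blast

lemma deriv_add_fun:
  fixes f g :: "real \<Rightarrow> real"
  assumes "\<forall>v. f differentiable (at v)" "\<forall>v. g differentiable (at v)"
  shows "deriv (\<lambda>x. f x + g x) = (\<lambda>x. deriv f x + deriv g x)"
proof
  fix x
  have a: "(f has_real_derivative deriv f x) (at x)" "(g has_real_derivative deriv g x) (at x)"
    using assms rdiff_deriv by blast+
  show "deriv (\<lambda>x. f x + g x) x = deriv f x + deriv g x"
    using DERIV_add[OF a] by (rule DERIV_imp_deriv)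
qed

lemma deriv_mult_fun:
  fixes f g :: "real \<Rightarrow> real"
  assumes "\<forall>v. f differentiable (at v)" "\<forall>v. g differentiable (at v)"
  shows "deriv (\<lambda>x. f x * g x) = (\<lambda>x. deriv f x * g x + f x * deriv g x)"
proof
  fix x
  have a: "(f has_real_derivative deriv f x) (at x)" "(g has_real_derivative deriv g x) (at x)"
    using assms rdiff_deriv by blast+
  show "deriv (\<lambda>x. f x * g x) x = deriv f x * g x + f x * deriv g x"
    using DERIV_mult[OF a] DERIV_imp_deriv by (metis mult.commute)
qed

lemma Ck_add: "Ck n f \<Longrightarrow> Ck n g \<Longrightarrow> Ck n (\<lambda>x. f x + g x)"
proof (induction n arbitrary: f g)
  case (Suc n)
  then have d: "\<forall>v. f differentiable (at v)" "\<forall>v. g differentiable (at v)"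
    by (auto simp: Ck_Suc)
  have "\<forall>v. (\<lambda>x. f x + g x) differentiable (at v)" using d by auto
  moreover have "Ck n (deriv (\<lambda>x. f x + g x))"
    unfolding deriv_add_fun[OF d] using Suc by (auto simp: Ck_Suc)
  ultimately show ?case by (simp add: Ck_Suc)
qed simp

lemma Ck_const: "Ck n (\<lambda>x. c)"
proof (induction n arbitrary: c)
  case (Suc n)
  have "deriv (\<lambda>x. c) = (\<lambda>x. 0)" by auto
  then show ?case using Suc by (simp add: Ck_Suc)
qed simp

lemma Ck_id: "Ck n (\<lambda>x. x)"
proof (cases n)
  case (Suc m)
  have "deriv (\<lambda>x. x) = (\<lambda>x. 1)" by (auto intro!: DERIV_imp_deriv derivative_eq_intros)
  then show ?thesis using Suc Ck_const by (simp add: Ck_Suc)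
qed simp

lemma Ck_mult: "Ck n f \<Longrightarrow> Ck n g \<Longrightarrow> Ck n (\<lambda>x. f x * g x)"
proof (induction n arbitrary: f g)
  case (Suc n)
  then have d: "\<forall>v. f differentiable (at v)" "\<forall>v. g differentiable (at v)"
    by (auto simp: Ck_Suc)
  have "\<forall>v. (\<lambda>x. f x * g x) differentiable (at v)" using d by auto
  moreover have "Ck n (deriv (\<lambda>x. f x * g x))"
    unfolding deriv_mult_fun[OF d]
    by (intro Ck_add Suc.IH) (use Suc.prems Ck_mono in \<open>auto simp: Ck_Suc\<close>)
  ultimately show ?case by (simp add: Ck_Suc)
qed simp

lemma Ck_R: "Ck n (\<lambda>v::real. 1 / (1 + v\<^sup>2))"
proof (induction n)
  case (Suc n)
  have D: "((\<lambda>v::real. 1 / (1 + v\<^sup>2)) has_real_derivative (-2 * x * (1 / (1 + x\<^sup>2)) * (1 / (1 + x\<^sup>2)))) (at x)" for x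
  proof -
    have "1 + x\<^sup>2 \<noteq> 0" by (smt (verit) zero_le_power2)
    then show ?thesis
      by (auto intro!: derivative_eq_intros simp: field_simps power2_eq_square)
  qed
  then have "deriv (\<lambda>v::real. 1 / (1 + v\<^sup>2)) = (\<lambda>x. -2 * x * (1 / (1 + x\<^sup>2)) * (1 / (1 + x\<^sup>2)))"
    by (auto intro!: DERIV_imp_deriv)
  moreover have "Ck n (\<lambda>x. -2 * x * (1 / (1 + x\<^sup>2)) * (1 / (1 + x\<^sup>2)))"
    by (intro Ck_mult Ck_const Ck_id Suc.IH)
  moreover have "\<forall>v. (\<lambda>v::real. 1 / (1 + v\<^sup>2)) differentiable (at v)"
    using D real_differentiable_def by blast
  ultimately show ?case by (simp add: Ck_Suc)
qed simp

lemma Ck_Wt: "Ck n (Wt g)"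
proof -
  have "Wt g = (\<lambda>v. (g * (g + 1)) * (1 / (1 + v\<^sup>2)))" by (auto simp: Wt_def fun_eq_iff)
  moreover have "Ck n (\<lambda>v. (g * (g + 1)) * (1 / (1 + v\<^sup>2)))" by (rule Ck_mult[OF Ck_const Ck_R])
  ultimately show ?thesis by simp
qed

lemma sol_dd: "L0_solution g f \<Longrightarrow> deriv (deriv f) = (\<lambda>v. Wt g v * f v)"
  by (auto simp: L0_solution_def L0_def fun_eq_iff)

lemma sol_smooth: assumes "L0_solution g f" shows "smooth_real f"
proof -
  have "Ck n f \<and> Ck n (deriv f)" for n
  proof (induction n)
    case (Suc n)
    then show ?case using assms sol_dd[OF assms] Ck_mult[OF Ck_Wt[of n g], of f]
      by (auto simp: Ck_Suc L0_solution_def)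
  qed simp
  then show ?thesis by (simp add: smooth_Ck)
qed

lemma sol_D1: "L0_solution g f \<Longrightarrow> (f has_real_derivative deriv f v) (at v)"
  by (simp add: L0_solution_def rdiff_deriv)

lemma sol_D2: "L0_solution g f \<Longrightarrow> (deriv f has_real_derivative Wt g v * f v) (at v)"
  using sol_dd[of g f] by (metis L0_solution_def rdiff_deriv)

lemma wronsk_const:
  assumes "L0_solution g f" "L0_solution g h"
  shows "f v * deriv h v - deriv f v * h v = f 0 * deriv h 0 - deriv f 0 * h 0"
proof -
  have "((\<lambda>v. f v * deriv h v - deriv f v * h v) has_real_derivative 0) (at x)" for x
    by (rule derivative_eq_intros sol_D1 sol_D2 assms refl)+ (simp add: algebra_simps)
  then show ?thesis using DERIV_isconst_all by blast
qed

lemma basis: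
  assumes "L0_solution g p1" "L0_solution g p2" "L0_solution g f"
    and W: "\<forall>v. p1 v * deriv p2 v - deriv p1 v * p2 v = 1"
  shows "\<exists>a b. \<forall>v. f v = a * p1 v + b * p2 v"
proof (intro exI allI)
  fix v
  define a where "a = f 0 * deriv p2 0 - deriv f 0 * p2 0"
  define b where "b = p1 0 * deriv f 0 - deriv p1 0 * f 0"
  have A: "f v * deriv p2 v - deriv f v * p2 v = a"
    unfolding a_def by (rule wronsk_const[OF assms(3,2)])
  have B: "p1 v * deriv f v - deriv p1 v * f v = b"
    unfolding b_def by (rule wronsk_const[OF assms(1,3)])
  have "a * p1 v + b * p2 v = f v * (p1 v * deriv p2 v - deriv p1 v * p2 v)"
    unfolding A[symmetric] B[symmetric] by (simp add: algebra_simps)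
  then show "f v = a * p1 v + b * p2 v" using W by simp
qed

lemma indep:
  assumes "L0_solution g p1" "L0_solution g p2"
    and W: "\<forall>v. p1 v * deriv p2 v - deriv p1 v * p2 v = 1"
    and Z: "\<forall>v. a * p1 v + b * p2 v = 0"
  shows "a = 0 \<and> b = 0"
proof -
  have Zf: "(\<lambda>v. a * p1 v + b * p2 v) = (\<lambda>v. 0)" using Z by auto
  have D: "((\<lambda>v. a * p1 v + b * p2 v) has_real_derivative a * deriv p1 v + b * deriv p2 v) (at v)" for v
    by (rule derivative_eq_intros sol_D1 assms refl)+ simp
  have Z1: "a * deriv p1 v + b * deriv p2 v = 0" for v
    using DERIV_imp_deriv[OF D[of v]] unfolding Zf by simp
  have "a = (a * p1 0 + b * p2 0) * deriv p2 0 - (a * deriv p1 0 + b * deriv p2 0) * p2 0"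
    using W[rule_format, of 0] by (simp add: algebra_simps)
  then have "a = 0" using Z Z1 by simp
  have "b = p1 0 * (a * deriv p1 0 + b * deriv p2 0) - deriv p1 0 * (a * p1 0 + b * p2 0)"
    using W[rule_format, of 0] by (simp add: algebra_simps)
  then have "b = 0" using Z Z1 by simp
  with \<open>a = 0\<close> show ?thesis by simp
qed

lemma quot_bound:
  fixes F Fd :: "real \<Rightarrow> real"
  assumes D: "\<And>u. (F has_real_derivative Fd u) (at u)"
    and B: "\<And>u. \<bar>u - v\<bar> \<le> 1 \<Longrightarrow> \<bar>Fd u\<bar> \<le> b"
    and h: "h \<noteq> 0" "\<bar>h\<bar> \<le> 1"
  shows "\<bar>(F (v + h) - F v) / h\<bar> \<le> b"
proof (cases "h > 0")
  case True
  obtain z where z: "v < z" "z < v + h" "F (v + h) - F v = (v + h - v) * Fd z"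
    using MVT2[of v "v + h" F Fd] D True by auto
  have "\<bar>Fd z\<bar> \<le> b" using B z h True by auto
  then show ?thesis using z h by simp
next
  case False
  then have "h < 0" using h by auto
  obtain z where z: "v + h < z" "z < v" "F v - F (v + h) = (v - (v + h)) * Fd z"
    using MVT2[of "v + h" v F Fd] D \<open>h < 0\<close> by auto
  have "\<bar>Fd z\<bar> \<le> b" using B z h by auto
  moreover have "(F (v + h) - F v) / h = Fd z" using z h by (simp add: field_simps)
  ultimately show ?thesis by simp
qed

lemma DERIV_integral_lborel:
  fixes F Fd :: "real \<Rightarrow> real \<Rightarrow> real"
  assumes D: "\<And>u s. ((\<lambda>u. F u s) has_real_derivative Fd u s) (at u)"
    and M: "\<And>u. F u \<in> borel_measurable lborel" "\<And>u. Fd u \<in> borel_measurable lborel"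
    and I: "\<And>u. integrable lborel (F u)"
    and g: "integrable lborel g"
    and B: "\<And>u s. \<bar>u - v\<bar> \<le> 1 \<Longrightarrow> \<bar>Fd u s\<bar> \<le> g s"
  shows "((\<lambda>u. \<integral>s. F u s \<partial>lborel) has_real_derivative (\<integral>s. Fd v s \<partial>lborel)) (at v)"
  unfolding DERIV_def tendsto_at_iff_sequentially
proof (intro allI impI)
  fix X :: "nat \<Rightarrow> real"
  assume X: "\<forall>i. X i \<in> UNIV - {0}" "X \<longlonglongrightarrow> 0"
  obtain N where N: "\<And>n. n \<ge> N \<Longrightarrow> \<bar>X n\<bar> \<le> 1"
    using X(2) unfolding LIMSEQ_def dist_real_def
    by (metis diff_zero less_eq_real_def zero_less_one)
  define Q where "Q = (\<lambda>h s. (F (v + h) s - F v s) / h)"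
  have eq: "((\<lambda>h. ((\<integral>s. F (v + h) s \<partial>lborel) - (\<integral>s. F v s \<partial>lborel)) / h) \<circ> X) n
       = (\<integral>s. Q (X n) s \<partial>lborel)" for n
    unfolding Q_def o_def by (simp add: Bochner_Integration.integral_diff[OF I I])
  have "(\<lambda>n. \<integral>s. Q (X (n + N)) s \<partial>lborel) \<longlonglongrightarrow> (\<integral>s. Fd v s \<partial>lborel)"
  proof (rule integral_dominated_convergence[where w = g])
    show "Fd v \<in> borel_measurable lborel" by (rule M)
    show "(\<lambda>s. Q (X (n + N)) s) \<in> borel_measurable lborel" for n
      unfolding Q_def using M(1) by measurable
    show "integrable lborel g" by (rule g)
    show "AE s in lborel. (\<lambda>n. Q (X (n + N)) s) \<longlonglongrightarrow> Fd v s"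
    proof (intro AE_I2)
      fix s
      have L: "((\<lambda>h. Q h s) \<longlongrightarrow> Fd v s) (at 0)"
        using D unfolding DERIV_def Q_def by blast
      have X': "\<And>i. X (i + N) \<in> UNIV - {0}" "(\<lambda>i. X (i + N)) \<longlonglongrightarrow> 0"
        using X by (auto intro: LIMSEQ_ignore_initial_segment)
      from L[unfolded tendsto_at_iff_sequentially, rule_format, OF X']
      show "(\<lambda>n. Q (X (n + N)) s) \<longlonglongrightarrow> Fd v s" by (simp add: o_def)
    qed
    show "AE s in lborel. norm (Q (X (n + N)) s) \<le> g s" for n
    proof (intro AE_I2)
      fix s
      show "norm (Q (X (n + N)) s) \<le> g s"
        unfolding Q_def real_norm_def
        by (rule quot_bound[OF D B]) (use X N in auto)
    qed
  qed
  then show "((\<lambda>h. ((\<integral>s. F (v + h) s \<partial>lborel) - (\<integral>s. F v s \<partial>lborel)) / h) \<circ> X) \<longlonglongrightarrow> (\<integral>s. Fd v s \<partial>lborel)"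
    unfolding eq by (rule LIMSEQ_offset)
qed

definition KF :: "real \<Rightarrow> real \<Rightarrow> real \<Rightarrow> real" where
  "KF m v s = (max s 0) powr m * (1 + (v + s)\<^sup>2) powr (-m)"
definition KF1 :: "real \<Rightarrow> real \<Rightarrow> real \<Rightarrow> real" where
  "KF1 m v s = (max s 0) powr m * (-2 * m) * ((v + s) * (1 + (v + s)\<^sup>2) powr (-m-1))"
definition KF2 :: "real \<Rightarrow> real \<Rightarrow> real \<Rightarrow> real" where
  "KF2 m v s = (max s 0) powr m * (-2 * m) *
     ((1 + (v + s)\<^sup>2) powr (-m-1) - 2 * (m + 1) * (v + s)\<^sup>2 * (1 + (v + s)\<^sup>2) powr (-m-2))"

lemma T_pos: "(0::real) < 1 + x\<^sup>2" by (smt (verit) zero_le_power2)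

lemma DT: "((\<lambda>v. (1 + (v + s)\<^sup>2) powr c) has_real_derivative
   c * (1 + (v + s)\<^sup>2) powr (c - 1) * (2 * (v + s))) (at v)"
proof -
  have "((\<lambda>v. 1 + (v + s)\<^sup>2) has_real_derivative 2 * (v + s)) (at v)"
    by (auto intro!: derivative_eq_intros)
  from DERIV_fun_powr[OF this T_pos] show ?thesis by simp
qed

lemma D_KF: "((\<lambda>v. KF m v s) has_real_derivative KF1 m v s) (at v)"
  unfolding KF_def KF1_def
  by (rule derivative_eq_intros DT refl)+ (simp add: algebra_simps)

lemma D_KF1: "((\<lambda>v. KF1 m v s) has_real_derivative KF2 m v s) (at v)"
  unfolding KF1_def KF2_def
  by (rule derivative_eq_intros DT refl)+ (simp add: algebra_simps power2_eq_square)

lemma powr_m1: "(x::real) > 0 \<Longrightarrow> x powr (a - 1) = x powr a / x"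
  by (simp add: powr_diff)

lemma KB:
  fixes R m :: real
  assumes "\<bar>u\<bar> \<le> R" "m \<ge> 0"
  shows "(max s 0) powr m * (1 + (u + s)\<^sup>2) powr (-m)
     \<le> ((2 + 2 * R\<^sup>2) * (3 + 2 * R\<^sup>2)) powr (m / 2) * (1 + s\<^sup>2) powr (-(m / 2))"
proof (cases "s > 0")
  case False
  then show ?thesis by (simp add: max_def)
next
  case True
  define T where "T = 1 + (u + s)\<^sup>2"
  have T1: "T \<ge> 1" unfolding T_def by simp
  have u2: "u\<^sup>2 \<le> R\<^sup>2" using assms by (metis abs_ge_zero power2_abs power_mono)
  have e1: "2 * (u + s)\<^sup>2 + 2 * u\<^sup>2 - s\<^sup>2 = (2 * u + s)\<^sup>2"
    by (simp add: power2_eq_square algebra_simps)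
  have e2: "(2 + 2 * R\<^sup>2) * T = 2 + 2 * (u + s)\<^sup>2 + 2 * R\<^sup>2 + 2 * R\<^sup>2 * (u + s)\<^sup>2"
    by (simp add: T_def algebra_simps)
  have e3: "R\<^sup>2 * (u + s)\<^sup>2 \<ge> 0" by simp
  have e4: "(2 * u + s)\<^sup>2 \<ge> 0" by simp
  have s2: "s\<^sup>2 \<le> (2 + 2 * R\<^sup>2) * T"
    using e1 e2 e3 e4 u2 by linarith
  have e5: "(3 + 2 * R\<^sup>2) * T = T + (2 + 2 * R\<^sup>2) * T" by (simp add: algebra_simps)
  have s3: "1 + s\<^sup>2 \<le> (3 + 2 * R\<^sup>2) * T"
    using s2 T1 e5 by linarith
  have "(max s 0) powr m = (s\<^sup>2) powr (m / 2)"
  proof -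
    have a: "s powr m = (s powr 2) powr (m / 2)" by (subst powr_powr) simp
    have b: "s powr 2 = s\<^sup>2" using True by (simp add: powr_numeral)
    show ?thesis using True a b by (simp add: max_def)
  qed
  also have "\<dots> \<le> ((2 + 2 * R\<^sup>2) * T) powr (m / 2)"
    using s2 assms by (intro powr_mono2) auto
  finally have A: "(max s 0) powr m \<le> ((2 + 2 * R\<^sup>2) * T) powr (m / 2)" .
  have B: "T powr (-(m/2)) \<le> ((1 + s\<^sup>2) / (3 + 2 * R\<^sup>2)) powr (-(m/2))"
    using s3 assms T1 by (intro powr_mono2') (auto simp: field_simps T_pos add_pos_nonneg)
  have "(max s 0) powr m * T powr (-m) = (max s 0) powr m * T powr (-(m/2)) * T powr (-(m/2))"
    by (simp add: powr_add[symmetric])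
  also have "\<dots> \<le> ((2 + 2 * R\<^sup>2) * T) powr (m / 2) * T powr (-(m/2)) * ((1 + s\<^sup>2) / (3 + 2 * R\<^sup>2)) powr (-(m/2))"
    using A B by (intro mult_mono) auto
  also have "\<dots> = ((2 + 2 * R\<^sup>2) * (3 + 2 * R\<^sup>2)) powr (m / 2) * (1 + s\<^sup>2) powr (-(m / 2))"
  proof -
    have p1: "((2 + 2 * R\<^sup>2) * T) powr (m / 2) = (2 + 2 * R\<^sup>2) powr (m / 2) * T powr (m / 2)"
      using T1 by (simp add: powr_mult)
    have p2: "T powr (m / 2) * T powr (-(m/2)) = 1"
      using T1 by (simp add: powr_add[symmetric])
    have p3: "((1 + s\<^sup>2) / (3 + 2 * R\<^sup>2)) powr (-(m/2)) = (1 + s\<^sup>2) powr (-(m/2)) * (3 + 2 * R\<^sup>2) powr (m/2)"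
      by (simp add: powr_divide powr_minus_divide add_pos_nonneg divide_simps)
    have p4: "((2 + 2 * R\<^sup>2) * (3 + 2 * R\<^sup>2)) powr (m / 2) = (2 + 2 * R\<^sup>2) powr (m / 2) * (3 + 2 * R\<^sup>2) powr (m / 2)"
      by (simp add: powr_mult)
    show ?thesis unfolding p1 p3 p4 using p2 by (simp add: algebra_simps)
  qed
  finally show ?thesis unfolding T_def .
qed

lemma powr_m1': "(T::real) \<ge> 1 \<Longrightarrow> T powr (-m-1) = T powr (-m) / T"
  by (simp add: powr_diff)
lemma powr_m2': "(T::real) \<ge> 1 \<Longrightarrow> T powr (-m-2) = T powr (-m) / T / T"
proof -
  assume "T \<ge> 1"
  then have "T powr (-m-2) = T powr (-m) / T powr 2" by (simp add: powr_diff)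
  also have "\<dots> = T powr (-m) / T / T" using \<open>T \<ge> 1\<close> by (simp add: power2_eq_square)
  finally show ?thesis .
qed

lemma KF_abs:
  assumes "m \<ge> 0"
  shows "\<bar>KF m u s\<bar> \<le> (max s 0) powr m * (1 + (u + s)\<^sup>2) powr (-m)"
    and "\<bar>KF1 m u s\<bar> \<le> 2 * m * ((max s 0) powr m * (1 + (u + s)\<^sup>2) powr (-m))"
    and "\<bar>KF2 m u s\<bar> \<le> 2 * m * (3 + 2 * m) * ((max s 0) powr m * (1 + (u + s)\<^sup>2) powr (-m))"
proof -
  define P where "P = (max s 0) powr m"
  define t where "t = u + s"
  define T where "T = 1 + t\<^sup>2"
  define Q where "Q = T powr (-m)"
  have P0: "P \<ge> 0" unfolding P_def by simp
  have T1: "T \<ge> 1" unfolding T_def by simp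
  have Q0: "Q \<ge> 0" unfolding Q_def by simp
  have tT: "\<bar>t\<bar> \<le> T"
  proof -
    have "0 \<le> (\<bar>t\<bar> - 1/2)\<^sup>2" by simp
    also have "(\<bar>t\<bar> - 1/2)\<^sup>2 = t\<^sup>2 - \<bar>t\<bar> + 1/4" by (simp add: power2_diff power2_eq_square[of "1/2"])
    finally show ?thesis unfolding T_def by linarith
  qed
  have t2T: "t\<^sup>2 \<le> T" unfolding T_def by simp
  show "\<bar>KF m u s\<bar> \<le> (max s 0) powr m * (1 + (u + s)\<^sup>2) powr (-m)"
    unfolding KF_def by simp
  have "\<bar>KF1 m u s\<bar> = 2 * m * P * (\<bar>t\<bar> * (Q / T))"
    unfolding KF1_def P_def[symmetric] t_def[symmetric] T_def[symmetric] Q_def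
    using assms T1 by (simp add: powr_m1' abs_mult P0)
  also have "\<dots> \<le> 2 * m * P * Q"
  proof -
    have "\<bar>t\<bar> * (Q / T) \<le> Q" using tT T1 Q0
      by (simp add: divide_simps mult.commute mult_left_mono)
    then show ?thesis by (rule mult_left_mono) (use assms P0 in simp)
  qed
  finally show "\<bar>KF1 m u s\<bar> \<le> 2 * m * ((max s 0) powr m * (1 + (u + s)\<^sup>2) powr (-m))"
    unfolding P_def Q_def T_def t_def by simp
  have "\<bar>KF2 m u s\<bar> = 2 * m * P * \<bar>Q / T - 2 * (m + 1) * t\<^sup>2 * (Q / T / T)\<bar>"
    unfolding KF2_def P_def[symmetric] t_def[symmetric] T_def[symmetric] Q_def
    using assms T1 by (simp add: powr_m1' powr_m2' abs_mult P0)
  also have "\<dots> \<le> 2 * m * P * ((3 + 2 * m) * Q)"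
  proof -
    have a: "Q / T \<le> Q" using T1 Q0 by (simp add: divide_simps) (metis mult_left_mono mult.right_neutral)
    have b: "t\<^sup>2 * (Q / T / T) \<le> Q"
    proof -
      have "t\<^sup>2 / T \<le> 1" using t2T T1 by simp
      moreover have "t\<^sup>2 * (Q / T / T) = (t\<^sup>2 / T) * (Q / T)" by simp
      moreover have "(t\<^sup>2 / T) * (Q / T) \<le> 1 * Q"
        using \<open>t\<^sup>2 / T \<le> 1\<close> a T1 Q0 by (intro mult_mono) auto
      ultimately show ?thesis by simp
    qed
    have c: "Q / T \<ge> 0" "t\<^sup>2 * (Q / T / T) \<ge> 0" using T1 Q0 by auto
    have c2: "2 * (m + 1) * t\<^sup>2 * (Q / T / T) \<ge> 0" using c assms
      by (metis mult.assoc mult_nonneg_nonneg zero_le_numeral add_nonneg_nonneg zero_le_one)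
    have "\<bar>Q / T - 2 * (m + 1) * t\<^sup>2 * (Q / T / T)\<bar> \<le> Q / T + 2 * (m + 1) * t\<^sup>2 * (Q / T / T)"
      using c(1) c2 by (simp only: abs_le_iff) linarith
    also have "\<dots> \<le> Q + 2 * (m + 1) * Q"
    proof -
      have "2 * (m + 1) * (t\<^sup>2 * (Q / T / T)) \<le> 2 * (m + 1) * Q"
        using b assms by (intro mult_left_mono) auto
      then show ?thesis using a by (simp only: mult.assoc)
    qed
    finally have "\<bar>Q / T - 2 * (m + 1) * t\<^sup>2 * (Q / T / T)\<bar> \<le> (3 + 2 * m) * Q"
      by (simp add: algebra_simps)
    then show ?thesis by (rule mult_left_mono) (use assms P0 in simp)
  qed
  finally show "\<bar>KF2 m u s\<bar> \<le> 2 * m * (3 + 2 * m) * ((max s 0) powr m * (1 + (u + s)\<^sup>2) powr (-m))"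
    unfolding P_def Q_def T_def t_def by (simp add: algebra_simps)
qed

lemma meas_KF: "KF m v \<in> borel_measurable lborel" "KF1 m v \<in> borel_measurable lborel"
   "KF2 m v \<in> borel_measurable lborel"
  unfolding KF_def KF1_def KF2_def by measurable

lemma h1_int:
  fixes q :: real
  assumes q: "q > 1"
  shows "set_integrable lborel {0<..} (\<lambda>s. s * (1 + s\<^sup>2) powr (-q))"
proof -
  define F where "F = (\<lambda>s::real. (1 + s\<^sup>2) powr (1 - q) / (2 - 2 * q))"
  have D: "DERIV F x :> x * (1 + x\<^sup>2) powr (-q)" for x
  proof -
    have "((\<lambda>v. (1 + (v + 0)\<^sup>2) powr (1 - q)) has_real_derivative
       (1 - q) * (1 + (x + 0)\<^sup>2) powr (1 - q - 1) * (2 * (x + 0))) (at x)" by (rule DT)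
    then have "((\<lambda>v. (1 + (v + 0)\<^sup>2) powr (1 - q) / (2 - 2 * q)) has_real_derivative
       (1 - q) * (1 + (x + 0)\<^sup>2) powr (1 - q - 1) * (2 * (x + 0)) / (2 - 2 * q)) (at x)"
      by (rule DERIV_cdivide)
    moreover have "(1 - q) * (1 + (x + 0)\<^sup>2) powr (1 - q - 1) * (2 * (x + 0)) / (2 - 2 * q)
        = x * (1 + x\<^sup>2) powr (-q)"
    proof -
      have aux: "(1 - q) * P * (2 * x) / (2 - 2 * q) = x * P" for P :: real
        using q by (simp add: field_simps)
      have e: "1 - q - 1 = -q" by simp
      show ?thesis unfolding add_0_right e by (rule aux)
    qed
    ultimately show ?thesis unfolding F_def by simp
  qed
  have C: "isCont (\<lambda>x. x * (1 + x\<^sup>2) powr (-q)) x" for x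
    by (intro continuous_intros) (metis T_pos order_less_irrefl)
  have contF: "isCont F x" for x using D DERIV_isCont by blast
  have A: "((F \<circ> real_of_ereal) \<longlongrightarrow> F 0) (at_right (ereal 0))"
    unfolding ereal_tendsto_simps1 using contF[of 0]
    by (simp add: isCont_def filterlim_at_split)
  have "((\<lambda>s. (1 + s\<^sup>2) powr (1 - q)) \<longlongrightarrow> 0) at_top"
  proof (rule tendsto_neg_powr)
    show "1 - q < 0" using q by simp
    show "filterlim (\<lambda>s::real. 1 + s\<^sup>2) at_top at_top"
      by (rule filterlim_tendsto_add_at_top[OF tendsto_const]) (simp add: filterlim_pow_at_top filterlim_ident)
  qed
  then have "(F \<longlongrightarrow> 0 / (2 - 2 * q)) at_top" unfolding F_def by (intro tendsto_divide tendsto_const) (use q in auto)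
  then have B: "((F \<circ> real_of_ereal) \<longlongrightarrow> 0) (at_left \<infinity>)"
    unfolding ereal_tendsto_simps1 by simp
  have "set_integrable lborel (einterval (ereal 0) \<infinity>) (\<lambda>s. s * (1 + s\<^sup>2) powr (-q))"
    by (rule interval_integral_FTC_nonneg(1)[OF _ _ _ _ A B]) (auto simp: D C)
  then show ?thesis by simp
qed

lemma gd_int:
  fixes m :: real
  assumes m: "m > 1"
  shows "integrable lborel (\<lambda>s. (1 + s\<^sup>2) powr (-(m / 2)))"
proof -
  define q where "q = m / 2 + 1 / 2"
  have q: "q > 1" using m by (simp add: q_def)
  define h1 where "h1 = (\<lambda>s::real. indicator {0<..} s *\<^sub>R (s * (1 + s\<^sup>2) powr (-q)))"
  have I1: "integrable lborel h1" using h1_int[OF q] unfolding set_integrable_def h1_def .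
  have I2: "integrable lborel (\<lambda>s. h1 (0 + (-1) * s))"
    by (rule lborel_integrable_real_affine[OF I1]) simp
  have I3: "integrable lborel (\<lambda>s::real. indicator {-1..1} s :: real)"
    by (intro integrable_real_indicator) auto
  have I: "integrable lborel (\<lambda>s. 2 * (h1 s + h1 (0 + (-1) * s)) + indicator {-1..1} s)"
    using I1 I2 I3 by auto
  show ?thesis
  proof (rule Bochner_Integration.integrable_bound[OF I])
    show "(\<lambda>s. (1 + s\<^sup>2) powr (-(m / 2))) \<in> borel_measurable lborel" by measurable
    show "AE x in lborel. norm ((1 + x\<^sup>2) powr (-(m / 2))) \<le>
         norm (2 * (h1 x + h1 (0 + (-1) * x)) + indicator {-1..1} x)"
    proof (intro AE_I2)
      fix x :: real
      have hx: "h1 x + h1 (0 + (-1) * x) = \<bar>x\<bar> * (1 + x\<^sup>2) powr (-q)"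
        unfolding h1_def by (auto simp: indicator_def)
      have nn: "0 \<le> 2 * (h1 x + h1 (0 + (-1) * x)) + indicator {-1..1} x"
        unfolding hx by (simp add: indicator_def)
      have "(1 + x\<^sup>2) powr (-(m / 2)) \<le> 2 * (\<bar>x\<bar> * (1 + x\<^sup>2) powr (-q)) + indicator {-1..1} x"
      proof (cases "\<bar>x\<bar> \<le> 1")
        case True
        have "(1 + x\<^sup>2) powr (-(m / 2)) \<le> 1" using powr_mono2'[of "-(m/2)" 1 "1 + x\<^sup>2"] m by simp
        moreover have "indicator {-1..1} x = (1::real)" using True by (auto simp: indicator_def abs_le_iff)
        moreover have "0 \<le> 2 * (\<bar>x\<bar> * (1 + x\<^sup>2) powr (-q))" by simp
        ultimately show ?thesis by linarith
      next
        case False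
        have e: "(1 + x\<^sup>2) powr (-(m / 2)) = (1 + x\<^sup>2) powr (1/2) * (1 + x\<^sup>2) powr (-q)"
          unfolding q_def by (simp add: powr_add[symmetric])
        have "(1 + x\<^sup>2) powr (1/2) = sqrt (1 + x\<^sup>2)" by (simp add: powr_half_sqrt T_pos less_imp_le)
        also have "\<dots> \<le> 2 * \<bar>x\<bar>"
        proof (rule real_le_lsqrt)
          have "1 \<le> \<bar>x\<bar>" using False by simp
          then have "1\<^sup>2 \<le> \<bar>x\<bar>\<^sup>2" by (intro power_mono) auto
          then have "1 \<le> x\<^sup>2" by simp
          moreover have "(2 * \<bar>x\<bar>)\<^sup>2 = 4 * x\<^sup>2" by (simp add: power_mult_distrib)
          ultimately show "1 + x\<^sup>2 \<le> (2 * \<bar>x\<bar>)\<^sup>2" by linarith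
        qed auto
        finally have "(1 + x\<^sup>2) powr (-(m / 2)) \<le> 2 * \<bar>x\<bar> * (1 + x\<^sup>2) powr (-q)"
          unfolding e by (intro mult_right_mono) auto
        then show ?thesis by (simp add: indicator_def)
      qed
      then show "norm ((1 + x\<^sup>2) powr (-(m / 2))) \<le> norm (2 * (h1 x + h1 (0 + (-1) * x)) + indicator {-1..1} x)"
        using nn unfolding hx by simp
    qed
  qed
qed

definition CR :: "real \<Rightarrow> real \<Rightarrow> real" where
  "CR m R = ((2 + 2 * R\<^sup>2) * (3 + 2 * R\<^sup>2)) powr (m / 2)"
definition gd :: "real \<Rightarrow> real \<Rightarrow> real" where
  "gd m s = (1 + s\<^sup>2) powr (-(m / 2))"

lemma KF_bounds:
  assumes "\<bar>u\<bar> \<le> R" "m \<ge> 0"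
  shows "\<bar>KF m u s\<bar> \<le> CR m R * gd m s"
    and "\<bar>KF1 m u s\<bar> \<le> 2 * m * CR m R * gd m s"
    and "\<bar>KF2 m u s\<bar> \<le> 2 * m * (3 + 2 * m) * CR m R * gd m s"
proof -
  have k: "(max s 0) powr m * (1 + (u + s)\<^sup>2) powr (-m) \<le> CR m R * gd m s"
    unfolding CR_def gd_def by (rule KB[OF assms])
  show "\<bar>KF m u s\<bar> \<le> CR m R * gd m s" using KF_abs(1)[OF assms(2), of u s] k by linarith
  have "2 * m * ((max s 0) powr m * (1 + (u + s)\<^sup>2) powr (-m)) \<le> 2 * m * (CR m R * gd m s)"
    using k assms by (intro mult_left_mono) auto
  then show "\<bar>KF1 m u s\<bar> \<le> 2 * m * CR m R * gd m s" using KF_abs(2)[OF assms(2), of u s] by simp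
  have "2 * m * (3 + 2 * m) * ((max s 0) powr m * (1 + (u + s)\<^sup>2) powr (-m)) \<le> 2 * m * (3 + 2 * m) * (CR m R * gd m s)"
    using k assms by (intro mult_left_mono) auto
  then show "\<bar>KF2 m u s\<bar> \<le> 2 * m * (3 + 2 * m) * CR m R * gd m s" using KF_abs(3)[OF assms(2), of u s] by simp
qed

lemma gd_int': "m > 1 \<Longrightarrow> integrable lborel (\<lambda>s. c * gd m s)"
  unfolding gd_def using gd_int by simp

lemma KF_int:
  assumes "m > 1"
  shows "integrable lborel (KF m v)" "integrable lborel (KF1 m v)" "integrable lborel (KF2 m v)"
proof -
  have R: "\<bar>v\<bar> \<le> \<bar>v\<bar>" by simp
  have m0: "m \<ge> 0" using assms by simp
  show "integrable lborel (KF m v)"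
    by (rule Bochner_Integration.integrable_bound[OF gd_int'[OF assms, of "CR m \<bar>v\<bar>"] meas_KF(1)])
       (use KF_bounds(1)[OF R m0] in \<open>auto intro!: AE_I2 order_trans[OF _ abs_ge_self]\<close>)
  show "integrable lborel (KF1 m v)"
    by (rule Bochner_Integration.integrable_bound[OF gd_int'[OF assms, of "2 * m * CR m \<bar>v\<bar>"] meas_KF(2)])
       (use KF_bounds(2)[OF R m0] in \<open>auto intro!: AE_I2 order_trans[OF _ abs_ge_self] simp: mult.assoc\<close>)
  show "integrable lborel (KF2 m v)"
    by (rule Bochner_Integration.integrable_bound[OF gd_int'[OF assms, of "2 * m * (3 + 2 * m) * CR m \<bar>v\<bar>"] meas_KF(3)])
       (use KF_bounds(3)[OF R m0] in \<open>auto intro!: AE_I2 order_trans[OF _ abs_ge_self] simp: mult.assoc\<close>)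
qed

definition Phi where "Phi m v = (\<integral>s. KF m v s \<partial>lborel)"
definition Phi1 where "Phi1 m v = (\<integral>s. KF1 m v s \<partial>lborel)"
definition Phi2 where "Phi2 m v = (\<integral>s. KF2 m v s \<partial>lborel)"

lemma D_Phi:
  assumes "m > 1"
  shows "(Phi m has_real_derivative Phi1 m v) (at v)"
proof -
  have m0: "m \<ge> 0" using assms by simp
  have "((\<lambda>u. \<integral>s. KF m u s \<partial>lborel) has_real_derivative (\<integral>s. KF1 m v s \<partial>lborel)) (at v)"
  proof (rule DERIV_integral_lborel[where g = "\<lambda>s. 2 * m * CR m (\<bar>v\<bar> + 1) * gd m s"])
    show "\<And>u s. ((\<lambda>u. KF m u s) has_real_derivative KF1 m u s) (at u)" by (rule D_KF)
    show "\<And>u. KF m u \<in> borel_measurable lborel" "\<And>u. KF1 m u \<in> borel_measurable lborel"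
      by (rule meas_KF)+
    show "\<And>u. integrable lborel (KF m u)" by (rule KF_int[OF assms])
    show "integrable lborel (\<lambda>s. 2 * m * CR m (\<bar>v\<bar> + 1) * gd m s)" by (rule gd_int'[OF assms])
    show "\<bar>KF1 m u s\<bar> \<le> 2 * m * CR m (\<bar>v\<bar> + 1) * gd m s" if "\<bar>u - v\<bar> \<le> 1" for u s
      by (rule KF_bounds(2)) (use that m0 in auto)
  qed
  then show ?thesis unfolding Phi_def[abs_def] Phi1_def .
qed

lemma D_Phi1:
  assumes "m > 1"
  shows "(Phi1 m has_real_derivative Phi2 m v) (at v)"
proof -
  have m0: "m \<ge> 0" using assms by simp
  have "((\<lambda>u. \<integral>s. KF1 m u s \<partial>lborel) has_real_derivative (\<integral>s. KF2 m v s \<partial>lborel)) (at v)"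
  proof (rule DERIV_integral_lborel[where g = "\<lambda>s. 2 * m * (3 + 2 * m) * CR m (\<bar>v\<bar> + 1) * gd m s"])
    show "\<And>u s. ((\<lambda>u. KF1 m u s) has_real_derivative KF2 m u s) (at u)" by (rule D_KF1)
    show "\<And>u. KF1 m u \<in> borel_measurable lborel" "\<And>u. KF2 m u \<in> borel_measurable lborel"
      by (rule meas_KF)+
    show "\<And>u. integrable lborel (KF1 m u)" by (rule KF_int[OF assms])
    show "integrable lborel (\<lambda>s. 2 * m * (3 + 2 * m) * CR m (\<bar>v\<bar> + 1) * gd m s)" by (rule gd_int'[OF assms])
    show "\<bar>KF2 m u s\<bar> \<le> 2 * m * (3 + 2 * m) * CR m (\<bar>v\<bar> + 1) * gd m s" if "\<bar>u - v\<bar> \<le> 1" for u s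
      by (rule KF_bounds(3)) (use that m0 in auto)
  qed
  then show ?thesis unfolding Phi1_def[abs_def] Phi2_def .
qed

lemma core:
  fixes s v m S P :: real
  assumes "s \<noteq> 0"
  shows "(m * (m * (S / s)) * (P * (1 + (v + s)\<^sup>2)) + ((-m-1) * P * (2 * (v + s))) * (m * S))
      * (-2 * (v + s) * (1 + v\<^sup>2) + (2 * v + s) * (1 + (v + s)\<^sup>2))
    + (-2 * (1 + v\<^sup>2) + (1 + (v + s)\<^sup>2) + (2 * v + s) * (2 * (v + s)))
      * (m * S * (P * (1 + (v + s)\<^sup>2)))
    = (1 + v\<^sup>2) * (S * (-2 * m) * (P * (1 + (v + s)\<^sup>2) - 2 * (m + 1) * (v + s)\<^sup>2 * P))
      - m * (m - 1) * (S * (P * (1 + (v + s)\<^sup>2) * (1 + (v + s)\<^sup>2)))"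
  using assms by (simp add: field_simps) algebra

definition Gf :: "real \<Rightarrow> real \<Rightarrow> real \<Rightarrow> real" where
  "Gf m v s = m * s powr m * (1 + (v + s)\<^sup>2) powr (-m-1) *
     (-2 * (v + s) * (1 + v\<^sup>2) + (2 * v + s) * (1 + (v + s)\<^sup>2))"

lemma DTs: "((\<lambda>s. (1 + (v + s)\<^sup>2) powr c) has_real_derivative
   c * (1 + (v + s)\<^sup>2) powr (c - 1) * (2 * (v + s))) (at s)"
proof -
  have "((\<lambda>s. 1 + (v + s)\<^sup>2) has_real_derivative 2 * (v + s)) (at s)"
    by (auto intro!: derivative_eq_intros)
  from DERIV_fun_powr[OF this T_pos] show ?thesis by simp
qed

lemma D_G:
  assumes s: "s > 0"
  shows "((\<lambda>s. Gf m v s) has_real_derivative (1 + v\<^sup>2) * KF2 m v s - m * (m - 1) * KF m v s) (at s)"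
proof -
  define T where "T = 1 + (v + s)\<^sup>2"
  have T1: "T \<ge> 1" unfolding T_def by simp
  have d1: "((\<lambda>s. m * s powr m) has_real_derivative m * (m * s powr (m - 1))) (at s)"
    using has_real_derivative_powr[OF s] by (rule DERIV_cmult)
  have d2: "((\<lambda>s. (1 + (v + s)\<^sup>2) powr (-m-1)) has_real_derivative
      (-m-1) * (1 + (v + s)\<^sup>2) powr (-m-1 - 1) * (2 * (v + s))) (at s)" by (rule DTs)
  have d3: "((\<lambda>s. -2 * (v + s) * (1 + v\<^sup>2) + (2 * v + s) * (1 + (v + s)\<^sup>2)) has_real_derivative
      (-2 * (1 + v\<^sup>2) + (1 + (v + s)\<^sup>2) + (2 * v + s) * (2 * (v + s)))) (at s)"
    by (rule derivative_eq_intros refl)+ (simp add: algebra_simps)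
  have D: "((\<lambda>s. Gf m v s) has_real_derivative
     (m * (m * s powr (m - 1)) * (1 + (v + s)\<^sup>2) powr (-m-1) +
      (-m-1) * (1 + (v + s)\<^sup>2) powr (-m-1 - 1) * (2 * (v + s)) * (m * s powr m)) *
      (-2 * (v + s) * (1 + v\<^sup>2) + (2 * v + s) * (1 + (v + s)\<^sup>2)) +
     (-2 * (1 + v\<^sup>2) + (1 + (v + s)\<^sup>2) + (2 * v + s) * (2 * (v + s))) *
      (m * s powr m * (1 + (v + s)\<^sup>2) powr (-m-1))) (at s)"
    unfolding Gf_def[abs_def] by (rule DERIV_mult[OF DERIV_mult[OF d1 d2] d3])
  have e1: "s powr (m - 1) = s powr m / s" using s by (simp add: powr_diff)
  have e2: "T powr (-m-1) = T powr (-m-2) * T"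
  proof -
    have ex: "-m-2+1 = -m-(1::real)" by simp
    have "T powr (-m-1) = T powr (-m-2 + 1)" by (simp only: ex)
    also have "\<dots> = T powr (-m-2) * T powr 1" by (rule powr_add)
    also have "\<dots> = T powr (-m-2) * T" using T1 by simp
    finally show ?thesis .
  qed
  have e3: "T powr (-m-1-1) = T powr (-m-2)"
  proof -
    have ex: "-m-1-1 = -m-(2::real)" by simp
    show ?thesis by (simp only: ex)
  qed
  have e4: "T powr (-m) = T powr (-m-2) * T * T"
  proof -
    have ex: "-m-2+2 = -(m::real)" by simp
    have "T powr (-m) = T powr (-m-2 + 2)" by (simp only: ex)
    also have "\<dots> = T powr (-m-2) * T powr 2" by (rule powr_add)
    also have "\<dots> = T powr (-m-2) * T * T" using T1 by (simp add: power2_eq_square)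
    finally show ?thesis .
  qed
  have e5: "max s 0 = s" using s by simp
  have "(m * (m * s powr (m - 1)) * (1 + (v + s)\<^sup>2) powr (-m-1) +
      (-m-1) * (1 + (v + s)\<^sup>2) powr (-m-1 - 1) * (2 * (v + s)) * (m * s powr m)) *
      (-2 * (v + s) * (1 + v\<^sup>2) + (2 * v + s) * (1 + (v + s)\<^sup>2)) +
     (-2 * (1 + v\<^sup>2) + (1 + (v + s)\<^sup>2) + (2 * v + s) * (2 * (v + s))) *
      (m * s powr m * (1 + (v + s)\<^sup>2) powr (-m-1))
     = (1 + v\<^sup>2) * KF2 m v s - m * (m - 1) * KF m v s"
    unfolding KF_def KF2_def e5 T_def[symmetric] e1 e2 e3 e4
    using core[of s m "s powr m" "T powr (-m-2)" v] s unfolding T_def by (simp add: mult_ac)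
  with D show ?thesis by simp
qed

lemma G_bound:
  assumes s: "s > 0" and m: "m \<ge> 0"
  shows "\<bar>Gf m v s\<bar> \<le> m * (3 + 2 * v\<^sup>2 + \<bar>v\<bar>) * (2 + 2 * v\<^sup>2) powr (m / 2)
            * (1 + (v + s)\<^sup>2) powr ((1 - m) / 2)"
proof -
  define t where "t = v + s"
  define T where "T = 1 + t\<^sup>2"
  define c where "c = 2 + 2 * v\<^sup>2"
  define K0 where "K0 = 3 + 2 * v\<^sup>2 + \<bar>v\<bar>"
  define B where "B = -2 * t * (1 + v\<^sup>2) + (2 * v + s) * T"
  have T1: "T \<ge> 1" unfolding T_def by simp
  have sT1: "sqrt T \<ge> 1" using T1 by simp
  have tT: "\<bar>t\<bar> \<le> sqrt T" by (rule real_le_rsqrt) (simp add: T_def)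
  have e1: "2 * (t - s) + s = t + v" unfolding t_def by simp
  have B_le: "\<bar>B\<bar> \<le> K0 * (T * sqrt T)"
  proof -
    have "\<bar>B\<bar> \<le> 2 * \<bar>t\<bar> * (1 + v\<^sup>2) + (\<bar>t\<bar> + \<bar>v\<bar>) * T"
    proof -
      have "\<bar>B\<bar> \<le> \<bar>-2 * t * (1 + v\<^sup>2)\<bar> + \<bar>(2 * v + s) * T\<bar>" unfolding B_def by (rule abs_triangle_ineq)
      also have "\<bar>-2 * t * (1 + v\<^sup>2)\<bar> = 2 * \<bar>t\<bar> * (1 + v\<^sup>2)" by (simp add: abs_mult)
      also have "\<bar>(2 * v + s) * T\<bar> = \<bar>t + v\<bar> * T"
      proof -
        have e: "2 * v + s = t + v" by (simp add: t_def)
        show ?thesis unfolding e using T1 by (simp add: abs_mult)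
      qed
      also have "\<bar>t + v\<bar> * T \<le> (\<bar>t\<bar> + \<bar>v\<bar>) * T" using T1 by (intro mult_right_mono abs_triangle_ineq) auto
      finally show ?thesis by simp
    qed
    also have "\<dots> \<le> 2 * (T * sqrt T) * (1 + v\<^sup>2) + (T * sqrt T + \<bar>v\<bar> * (T * sqrt T))"
    proof -
      have a: "\<bar>t\<bar> \<le> T * sqrt T" using tT T1 sT1 by (smt (verit) mult_le_cancel_right1 mult_nonneg_nonneg)
      have b: "\<bar>t\<bar> * T \<le> T * sqrt T" using tT T1 by (simp add: mult.commute mult_left_mono)
      have c': "\<bar>v\<bar> * T \<le> \<bar>v\<bar> * (T * sqrt T)" using T1 sT1
        by (intro mult_left_mono) (auto simp: mult_le_cancel_left1)
      have "2 * \<bar>t\<bar> * (1 + v\<^sup>2) \<le> 2 * (T * sqrt T) * (1 + v\<^sup>2)" using a by (intro mult_right_mono) auto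
      then show ?thesis using b c' by (simp add: distrib_right)
    qed
    also have "\<dots> = K0 * (T * sqrt T)" unfolding K0_def by (simp add: algebra_simps)
    finally show ?thesis .
  qed
  have s2: "s\<^sup>2 \<le> c * T"
  proof -
    have e1: "2 * t\<^sup>2 + 2 * v\<^sup>2 - s\<^sup>2 = (2 * v + s)\<^sup>2 + 0" unfolding t_def
      by (simp add: power2_eq_square algebra_simps)
    have "c * T = 2 + 2 * t\<^sup>2 + 2 * v\<^sup>2 + 2 * v\<^sup>2 * t\<^sup>2" unfolding c_def T_def by (simp add: algebra_simps)
    moreover have "0 \<le> v\<^sup>2 * t\<^sup>2" by simp
    moreover have "0 \<le> (2 * v + s)\<^sup>2" by simp
    ultimately show ?thesis using e1 by linarith
  qed
  have S: "s powr m \<le> (c * T) powr (m / 2)"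
  proof -
    have a: "s powr m = (s powr 2) powr (m / 2)" by (subst powr_powr) simp
    have b: "s powr 2 = s\<^sup>2" using s by (simp add: powr_numeral)
    show ?thesis unfolding a b using s2 m by (intro powr_mono2) auto
  qed
  have "\<bar>Gf m v s\<bar> = m * s powr m * T powr (-m-1) * \<bar>B\<bar>"
    unfolding Gf_def B_def T_def t_def using m by (simp add: abs_mult)
  also have "\<dots> \<le> m * ((c * T) powr (m / 2)) * T powr (-m-1) * (K0 * (T * sqrt T))"
    using S B_le m by (intro mult_mono mult_right_mono mult_left_mono) auto
  also have "\<dots> = m * K0 * c powr (m / 2) * (T powr (m / 2) * T powr (-m-1) * T powr 1 * T powr (1/2))"
    using T1 by (simp add: powr_mult powr_half_sqrt c_def add_pos_nonneg mult_ac)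
  also have "T powr (m / 2) * T powr (-m-1) * T powr 1 * T powr (1/2) = T powr ((1 - m) / 2)"
  proof -
    have "T powr (m / 2) * T powr (-m-1) * T powr 1 * T powr (1/2) = T powr (m / 2 + (-m-1) + 1 + 1/2)"
      by (simp only: powr_add)
    also have "m / 2 + (-m-1) + 1 + 1/2 = (1 - m) / 2" by (simp add: field_simps)
    finally show ?thesis .
  qed
  finally show ?thesis unfolding K0_def c_def T_def t_def by simp
qed

lemma T_nz: "1 + x\<^sup>2 \<noteq> (0::real)"
  by (metis T_pos order_less_irrefl)

lemma filterlim_T: "filterlim (\<lambda>s::real. 1 + (v + s)\<^sup>2) at_top at_top"
proof -
  have "filterlim (\<lambda>s::real. v + s) at_top at_top"
    by (rule filterlim_tendsto_add_at_top[OF tendsto_const filterlim_ident])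
  then have "filterlim (\<lambda>s::real. (v + s)\<^sup>2) at_top at_top"
    using filterlim_pow_at_top[of 2 "\<lambda>s. v + s" at_top] by simp
  then show ?thesis by (rule filterlim_tendsto_add_at_top[OF tendsto_const])
qed

lemma G_lim_top:
  assumes m: "m > 1"
  shows "((\<lambda>s. Gf m v s) \<longlongrightarrow> 0) at_top"
proof (rule Lim_null_comparison)
  define K where "K = m * (3 + 2 * v\<^sup>2 + \<bar>v\<bar>) * (2 + 2 * v\<^sup>2) powr (m / 2)"
  show "\<forall>\<^sub>F s in at_top. norm (Gf m v s) \<le> K * (1 + (v + s)\<^sup>2) powr ((1 - m) / 2)"
    using eventually_gt_at_top[of 0]
    by eventually_elim (use G_bound m in \<open>auto simp: K_def\<close>)
  have "((\<lambda>s. (1 + (v + s)\<^sup>2) powr ((1 - m) / 2)) \<longlongrightarrow> 0) at_top"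
    by (rule tendsto_neg_powr[OF _ filterlim_T]) (use m in simp)
  then show "((\<lambda>s. K * (1 + (v + s)\<^sup>2) powr ((1 - m) / 2)) \<longlongrightarrow> 0) at_top"
    by (rule tendsto_mult_right_zero)
qed

lemma G_lim_0:
  assumes m: "m > 0"
  shows "((\<lambda>s. Gf m v s) \<longlongrightarrow> 0) (at_right 0)"
proof -
  have P: "((\<lambda>s::real. s powr m) \<longlongrightarrow> 0) (at_right 0)"
  proof (rule tendsto_zero_powrI)
    show "((\<lambda>s::real. s) \<longlongrightarrow> 0) (at_right 0)" by (rule tendsto_ident_at)
    show "((\<lambda>s::real. m) \<longlongrightarrow> m) (at_right 0)" by simp
    show "\<forall>\<^sub>F x in at_right 0. 0 \<le> (x::real)"
      using eventually_at_right_less[of "0::real"] by eventually_elim simp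
  qed (use m in simp)
  have "((\<lambda>s. m * s powr m * (1 + (v + s)\<^sup>2) powr (-m-1) *
     (-2 * (v + s) * (1 + v\<^sup>2) + (2 * v + s) * (1 + (v + s)\<^sup>2))) \<longlongrightarrow>
     m * 0 * (1 + (v + 0)\<^sup>2) powr (-m-1) * (-2 * (v + 0) * (1 + v\<^sup>2) + (2 * v + 0) * (1 + (v + 0)\<^sup>2))) (at_right 0)"
    by (intro tendsto_intros P) (auto simp: T_nz)
  then show ?thesis unfolding Gf_def by simp
qed


lemma KF_nonpos: "s \<le> 0 \<Longrightarrow> KF m v s = 0" "s \<le> 0 \<Longrightarrow> KF1 m v s = 0" "s \<le> 0 \<Longrightarrow> KF2 m v s = 0"
  by (simp_all add: KF_def KF1_def KF2_def max_def)

lemma ODE_Phi: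
  assumes m: "m > 1"
  shows "(1 + v\<^sup>2) * Phi2 m v = m * (m - 1) * Phi m v"
proof -
  define f where "f = (\<lambda>s. (1 + v\<^sup>2) * KF2 m v s - m * (m - 1) * KF m v s)"
  have fint: "integrable lborel f" unfolding f_def using KF_int[OF m] by auto
  have f0: "f s = 0" if "s \<le> 0" for s unfolding f_def using KF_nonpos that by simp
  have "(LBINT s=ereal 0..\<infinity>. f s) = 0 - 0"
  proof (rule interval_integral_FTC_integrable[where F = "Gf m v"])
    show "ereal 0 < \<infinity>" by simp
    show "(Gf m v has_vector_derivative f x) (at x)" if "ereal 0 < ereal x" "ereal x < \<infinity>" for x
      using D_G[of x m v] that unfolding f_def has_real_derivative_iff_has_vector_derivative by simp
    show "isCont f x" if "ereal 0 < ereal x" "ereal x < \<infinity>" for x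
    proof -
      have x: "x > 0" using that by simp
      have "isCont (\<lambda>s. (1 + v\<^sup>2) * ((max s 0) powr m * (-2 * m) *
           ((1 + (v + s)\<^sup>2) powr (-m-1) - 2 * (m + 1) * (v + s)\<^sup>2 * (1 + (v + s)\<^sup>2) powr (-m-2)))
           - m * (m - 1) * ((max s 0) powr m * (1 + (v + s)\<^sup>2) powr (-m))) x"
        using x by (intro continuous_intros) (auto simp: T_nz)
      then show ?thesis unfolding f_def KF_def KF2_def .
    qed
    show "set_integrable lborel (einterval (ereal 0) \<infinity>) f"
      unfolding set_integrable_def by (rule integrable_mult_indicator) (auto intro: fint)
    show "((Gf m v \<circ> real_of_ereal) \<longlongrightarrow> 0) (at_right (ereal 0))"
      unfolding ereal_tendsto_simps1 using G_lim_0[of m v] m by simp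
    show "((Gf m v \<circ> real_of_ereal) \<longlongrightarrow> 0) (at_left \<infinity>)"
      unfolding ereal_tendsto_simps1 using G_lim_top[OF m, of v] by simp
  qed
  moreover have "(LBINT s=ereal 0..\<infinity>. f s) = (\<integral>s. f s \<partial>lborel)"
    unfolding interval_integral_to_infinity_eq set_lebesgue_integral_def
    by (rule Bochner_Integration.integral_cong) (auto simp: indicator_def f0)
  moreover have "(\<integral>s. f s \<partial>lborel) = (1 + v\<^sup>2) * Phi2 m v - m * (m - 1) * Phi m v"
    unfolding f_def Phi_def Phi2_def using KF_int[OF m]
    by (simp add: Bochner_Integration.integral_diff)
  ultimately show ?thesis by simp
qed

lemma int_pos:
  fixes f :: "real \<Rightarrow> real"
  assumes I: "integrable lborel f" and nn: "\<And>x. 0 \<le> f x"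
    and pos: "\<And>x. a < x \<Longrightarrow> x < b \<Longrightarrow> 0 < f x" and ab: "a < b"
  shows "0 < (\<integral>x. f x \<partial>lborel)"
proof -
  have ge: "0 \<le> (\<integral>x. f x \<partial>lborel)" using nn by (simp add: integral_nonneg)
  have "(\<integral>x. f x \<partial>lborel) \<noteq> 0"
  proof
    assume "(\<integral>x. f x \<partial>lborel) = 0"
    then have "AE x in lborel. f x = 0"
      using integral_nonneg_eq_0_iff_AE[OF I] nn by simp
    then have "AE x in lborel. x \<notin> {a<..<b}"
      by eventually_elim (use pos in force)
    then have "{a<..<b} \<in> null_sets lborel"
      by (subst AE_iff_null_sets) auto
    then have "emeasure lborel {a<..<b} = 0" by auto
    then show False using ab by simp
  qed
  with ge show ?thesis by simp
qed

lemma Phi_pos: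
  assumes m: "m > 1"
  shows "Phi m v > 0"
  unfolding Phi_def
proof (rule int_pos[where a=0 and b=1])
  show "integrable lborel (KF m v)" by (rule KF_int(1)[OF m])
  show "0 \<le> KF m v x" for x by (simp add: KF_def)
  show "0 < KF m v x" if "0 < x" for x using that by (auto simp: KF_def T_nz intro!: mult_pos_pos)
qed simp_all

lemma Phi1_neg:
  assumes m: "m > 1"
  shows "Phi1 m 0 < 0"
proof -
  have "0 < (\<integral>s. - KF1 m 0 s \<partial>lborel)"
  proof (rule int_pos[of _ 0 1])
    show "integrable lborel (\<lambda>s. - KF1 m 0 s)" using KF_int(2)[OF m] by simp
    show "0 \<le> - KF1 m 0 x" for x using m by (cases "x \<le> 0") (auto simp: KF1_def max_def)
    show "0 < - KF1 m 0 x" if "0 < x" for x using that m by (auto simp: KF1_def T_nz intro!: mult_pos_pos)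
  qed simp
  then show ?thesis unfolding Phi1_def by simp
qed

definition H :: "real \<Rightarrow> real \<Rightarrow> real \<Rightarrow> real" where
  "H m e s = (max s 0) powr m * (e\<^sup>2 + (1 + s)\<^sup>2) powr (-m)"

lemma KF_scale_top:
  assumes v: "v > 0"
  shows "KF m v (v * s) = v powr (-m) * H m (1 / v) s"
proof -
  have a: "max (v * s) 0 = v * max s 0" using v by (auto simp: max_def mult_le_0_iff)
  have b: "(v * max s 0) powr m = v powr m * (max s 0) powr m" using v by (simp add: powr_mult)
  have c: "1 + (v + v * s)\<^sup>2 = v\<^sup>2 * ((1 / v)\<^sup>2 + (1 + s)\<^sup>2)" using v
    by (simp add: field_simps power2_eq_square)
  have d: "(v\<^sup>2 * ((1 / v)\<^sup>2 + (1 + s)\<^sup>2)) powr (-m) = (v\<^sup>2) powr (-m) * ((1 / v)\<^sup>2 + (1 + s)\<^sup>2) powr (-m)"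
    by (rule powr_mult)
  have e: "(v\<^sup>2) powr (-m) = v powr (-2 * m)"
  proof -
    have "v\<^sup>2 = v powr 2" using v by (simp add: powr_numeral)
    then show ?thesis by (simp add: powr_powr)
  qed
  have f: "v powr m * v powr (-2 * m) = v powr (-m)" by (simp add: powr_add[symmetric])
  have "KF m v (v * s) = v powr m * (max s 0) powr m * ((v\<^sup>2) powr (-m) * ((1 / v)\<^sup>2 + (1 + s)\<^sup>2) powr (-m))"
    unfolding KF_def a b c d ..
  also have "\<dots> = (v powr m * v powr (-2 * m)) * H m (1 / v) s" unfolding e H_def by (simp add: mult_ac)
  finally show ?thesis unfolding f .
qed

lemma Phi_scale_top:
  assumes v: "v > 0"
  shows "v powr (m - 1) * Phi m v = (\<integral>s. H m (1 / v) s \<partial>lborel)"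
proof -
  have "Phi m v = \<bar>v\<bar> *\<^sub>R (\<integral>s. KF m v (0 + v * s) \<partial>lborel)"
    unfolding Phi_def by (rule lborel_integral_real_affine) (use v in simp)
  also have "\<dots> = v * (v powr (-m) * (\<integral>s. H m (1 / v) s \<partial>lborel))"
    using v by (simp add: KF_scale_top)
  finally have "v powr (m - 1) * Phi m v = (v powr (m - 1) * v * v powr (-m)) * (\<integral>s. H m (1 / v) s \<partial>lborel)"
    by (simp add: mult_ac)
  also have "v powr (m - 1) * v * v powr (-m) = 1"
  proof -
    have "v powr (m - 1) * v = v powr m" using v by (simp add: powr_diff)
    then show ?thesis using v by (simp add: powr_minus)
  qed
  finally show ?thesis by simp
qed

lemma H_bound:
  assumes "m \<ge> 0"
  shows "\<bar>H m e s\<bar> \<le> CR m 0 * gd m s"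
proof -
  have "H m e s \<le> (max s 0) powr m * (1 + (0 + s)\<^sup>2) powr (-m)"
  proof (cases "s > 0")
    case True
    have "(1 + s)\<^sup>2 \<ge> 1 + s\<^sup>2" using True by (simp add: power2_eq_square algebra_simps)
    moreover have "0 \<le> e\<^sup>2" by simp
    ultimately have le: "1 + (0 + s)\<^sup>2 \<le> e\<^sup>2 + (1 + s)\<^sup>2" by (simp only: add_0_left)
    have "(e\<^sup>2 + (1 + s)\<^sup>2) powr (-m) \<le> (1 + (0 + s)\<^sup>2) powr (-m)"
      by (rule powr_mono2'[OF _ _ le]) (use assms T_pos in auto)
    then show ?thesis unfolding H_def by (intro mult_left_mono) auto
  next
    case False then show ?thesis by (simp add: H_def max_def)
  qed
  also have "\<dots> \<le> CR m 0 * gd m s" unfolding CR_def gd_def using KB[of 0 0 m s] assms by simp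
  finally show ?thesis by (simp add: H_def)
qed

lemma H_lim:
  assumes m: "m > 1"
  shows "((\<lambda>v. \<integral>s. H m (1 / v) s \<partial>lborel) \<longlongrightarrow> (\<integral>s. H m 0 s \<partial>lborel)) at_top"
proof (rule integral_dominated_convergence_at_top[where w = "\<lambda>s. CR m 0 * gd m s"])
  show "H m 0 \<in> borel_measurable lborel" unfolding H_def by measurable
  show "(\<lambda>s. H m (1 / t) s) \<in> borel_measurable lborel" for t unfolding H_def by measurable
  show "integrable lborel (\<lambda>s. CR m 0 * gd m s)" by (rule gd_int'[OF m])
  show "AE s in lborel. ((\<lambda>t. H m (1 / t) s) \<longlongrightarrow> H m 0 s) at_top"
  proof (intro AE_I2)
    fix s :: real
    show "((\<lambda>t. H m (1 / t) s) \<longlongrightarrow> H m 0 s) at_top"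
    proof (cases "s > 0")
      case True
      have "((\<lambda>t. (max s 0) powr m * ((1 / t)\<^sup>2 + (1 + s)\<^sup>2) powr (-m)) \<longlongrightarrow>
            (max s 0) powr m * (0\<^sup>2 + (1 + s)\<^sup>2) powr (-m)) at_top"
        using True by (intro tendsto_intros tendsto_divide_0[OF tendsto_const] filterlim_ident
          filterlim_at_top_imp_at_infinity) auto
      then show ?thesis unfolding H_def by simp
    next
      case False then show ?thesis by (simp add: H_def max_def)
    qed
  qed
  show "\<forall>\<^sub>F t in at_top. AE s in lborel. norm (H m (1 / t) s) \<le> CR m 0 * gd m s"
    using H_bound m by auto
qed

lemma asym_top:
  assumes m: "m > 1"
  shows "\<exists>c>0. ((\<lambda>v. Phi m v / (c * \<bar>v\<bar> powr (1 - m))) \<longlongrightarrow> 1) at_top"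
proof -
  define c where "c = (\<integral>s. H m 0 s \<partial>lborel)"
  have Hi: "integrable lborel (H m 0)"
  proof (rule Bochner_Integration.integrable_bound[OF gd_int'[OF m, of "CR m 0"]])
    show "H m 0 \<in> borel_measurable lborel" unfolding H_def by measurable
    show "AE x in lborel. norm (H m 0 x) \<le> norm (CR m 0 * gd m x)"
      by (intro AE_I2) (use H_bound[of m 0] m in \<open>auto intro: order_trans[OF _ abs_ge_self]\<close>)
  qed
  have cpos: "c > 0" unfolding c_def
  proof (rule int_pos[OF Hi, of 0 1])
    show "0 \<le> H m 0 x" for x by (simp add: H_def)
    show "0 < H m 0 x" if "0 < x" for x using that
      by (auto simp: H_def intro!: mult_pos_pos)
  qed simp
  have "((\<lambda>v. (v powr (m - 1) * Phi m v) / c) \<longlongrightarrow> c / c) at_top"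
  proof (rule tendsto_divide[OF _ tendsto_const])
    show "((\<lambda>v. v powr (m - 1) * Phi m v) \<longlongrightarrow> c) at_top"
      unfolding c_def
      by (rule Lim_transform_eventually[OF H_lim[OF m]])
         (use eventually_gt_at_top[of 0] in \<open>eventually_elim, simp add: Phi_scale_top\<close>)
  qed (use cpos in simp)
  then have L: "((\<lambda>v. (v powr (m - 1) * Phi m v) / c) \<longlongrightarrow> 1) at_top" using cpos by simp
  have "((\<lambda>v. Phi m v / (c * \<bar>v\<bar> powr (1 - m))) \<longlongrightarrow> 1) at_top"
  proof (rule Lim_transform_eventually[OF L])
    show "\<forall>\<^sub>F v in at_top. v powr (m - 1) * Phi m v / c = Phi m v / (c * \<bar>v\<bar> powr (1 - m))"
      using eventually_gt_at_top[of 0]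
    proof eventually_elim
      case (elim v)
      have "\<bar>v\<bar> powr (1 - m) = 1 / v powr (m - 1)" using elim by (simp add: powr_minus_divide[symmetric] powr_minus)
      then show ?case using elim cpos by (simp add: field_simps)
    qed
  qed
  with cpos show ?thesis by blast
qed

definition J :: "real \<Rightarrow> real \<Rightarrow> real \<Rightarrow> real" where
  "J m e t = (max (1 + e * t) 0) powr m * (1 + t\<^sup>2) powr (-m)"

lemma KF_scale_bot:
  assumes w: "w > 0"
  shows "KF m (-w) (w + 1 * t) = w powr m * J m (1 / w) t"
proof -
  have a: "max (w + t) 0 = w * max (1 + 1 / w * t) 0" using w
    by (auto simp: max_def field_simps mult_le_0_iff)
  have b: "(w * max (1 + 1 / w * t) 0) powr m = w powr m * (max (1 + 1 / w * t) 0) powr m"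
    using w by (simp add: powr_mult)
  show ?thesis unfolding KF_def J_def using a b by simp
qed

lemma Phi_scale_bot:
  assumes w: "w > 0"
  shows "w powr (-m) * Phi m (-w) = (\<integral>t. J m (1 / w) t \<partial>lborel)"
proof -
  have "Phi m (-w) = \<bar>1\<bar> *\<^sub>R (\<integral>t. KF m (-w) (w + 1 * t) \<partial>lborel)"
    unfolding Phi_def by (rule lborel_integral_real_affine) simp
  also have "\<dots> = w powr m * (\<integral>t. J m (1 / w) t \<partial>lborel)"
    using w by (simp only: KF_scale_bot) simp
  finally show ?thesis using w by (simp add: powr_minus)
qed

lemma J_bound:
  assumes m: "m \<ge> 0" and e: "0 \<le> e" "e \<le> 1"
  shows "\<bar>J m e t\<bar> \<le> 2 powr (m / 2) * gd m t"
proof -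
  have m1: "max (1 + e * t) 0 \<le> 1 + \<bar>t\<bar>"
  proof -
    have "e * t \<le> \<bar>t\<bar>"
    proof -
      have "e * t \<le> \<bar>e * t\<bar>" by simp
      also have "\<bar>e * t\<bar> = e * \<bar>t\<bar>" using e by (simp add: abs_mult)
      also have "\<dots> \<le> \<bar>t\<bar>" using e by (intro mult_left_le_one_le) auto
      finally show ?thesis .
    qed
    then show ?thesis by simp
  qed
  have sq: "(1 + \<bar>t\<bar>)\<^sup>2 \<le> 2 * (1 + t\<^sup>2)"
  proof -
    define a where "a = \<bar>t\<bar>"
    have e1: "2 * (1 + a\<^sup>2) - (1 + a)\<^sup>2 = (a - 1)\<^sup>2" by (simp add: power2_eq_square algebra_simps)
    have "0 \<le> (a - 1)\<^sup>2" by simp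
    then have "(1 + a)\<^sup>2 \<le> 2 * (1 + a\<^sup>2)" using e1 by linarith
    moreover have "a\<^sup>2 = t\<^sup>2" by (simp add: a_def)
    ultimately show ?thesis by (simp add: a_def)
  qed
  have "(max (1 + e * t) 0) powr m \<le> (1 + \<bar>t\<bar>) powr m" using m1 m by (intro powr_mono2) auto
  also have "(1 + \<bar>t\<bar>) powr m = ((1 + \<bar>t\<bar>)\<^sup>2) powr (m / 2)"
  proof -
    have "(1 + \<bar>t\<bar>) powr m = ((1 + \<bar>t\<bar>) powr 2) powr (m / 2)" by (subst powr_powr) simp
    also have "(1 + \<bar>t\<bar>) powr 2 = (1 + \<bar>t\<bar>)\<^sup>2" by (rule powr_numeral) simp
    finally show ?thesis .
  qed
  also have "\<dots> \<le> (2 * (1 + t\<^sup>2)) powr (m / 2)" using sq m by (intro powr_mono2) auto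
  also have "\<dots> = 2 powr (m / 2) * (1 + t\<^sup>2) powr (m / 2)" by (rule powr_mult)
  finally have A: "(max (1 + e * t) 0) powr m \<le> 2 powr (m / 2) * (1 + t\<^sup>2) powr (m / 2)" .
  have "J m e t \<le> 2 powr (m / 2) * (1 + t\<^sup>2) powr (m / 2) * (1 + t\<^sup>2) powr (-m)"
    unfolding J_def using A by (intro mult_right_mono) auto
  also have "\<dots> = 2 powr (m / 2) * gd m t"
  proof -
    have "(1 + t\<^sup>2) powr (m / 2) * (1 + t\<^sup>2) powr (-m) = (1 + t\<^sup>2) powr (-(m / 2))"
      by (simp add: powr_add[symmetric])
    then show ?thesis unfolding gd_def by (simp add: mult.assoc)
  qed
  finally show ?thesis by (simp add: J_def)
qed

lemma J_lim:
  assumes m: "m > 1"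
  shows "((\<lambda>w. \<integral>t. J m (1 / w) t \<partial>lborel) \<longlongrightarrow> (\<integral>t. J m 0 t \<partial>lborel)) at_top"
proof (rule integral_dominated_convergence_at_top[where w = "\<lambda>t. 2 powr (m / 2) * gd m t"])
  show "J m 0 \<in> borel_measurable lborel" unfolding J_def by measurable
  show "(\<lambda>t. J m (1 / w) t) \<in> borel_measurable lborel" for w unfolding J_def by measurable
  show "integrable lborel (\<lambda>t. 2 powr (m / 2) * gd m t)" by (rule gd_int'[OF m])
  show "AE t in lborel. ((\<lambda>w. J m (1 / w) t) \<longlongrightarrow> J m 0 t) at_top"
  proof (intro AE_I2)
    fix t :: real
    have "((\<lambda>w. (max (1 + 1 / w * t) 0) powr m * (1 + t\<^sup>2) powr (-m)) \<longlongrightarrow>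
          (max (1 + 0 * t) 0) powr m * (1 + t\<^sup>2) powr (-m)) at_top"
      by (intro tendsto_intros tendsto_divide_0[OF tendsto_const] filterlim_ident
          filterlim_at_top_imp_at_infinity) auto
    then show "((\<lambda>w. J m (1 / w) t) \<longlongrightarrow> J m 0 t) at_top" unfolding J_def by simp
  qed
  show "\<forall>\<^sub>F w in at_top. AE t in lborel. norm (J m (1 / w) t) \<le> 2 powr (m / 2) * gd m t"
    using eventually_ge_at_top[of 1]
    by eventually_elim (use J_bound m in auto)
qed

lemma asym_bot:
  assumes m: "m > 1"
  shows "\<exists>c>0. ((\<lambda>v. Phi m v / (c * \<bar>v\<bar> powr m)) \<longlongrightarrow> 1) at_bot"
proof -
  define c where "c = (\<integral>t. J m 0 t \<partial>lborel)"
  have Ji: "integrable lborel (J m 0)"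
  proof (rule Bochner_Integration.integrable_bound[OF gd_int'[OF m, of "2 powr (m / 2)"]])
    show "J m 0 \<in> borel_measurable lborel" unfolding J_def by measurable
    show "AE x in lborel. norm (J m 0 x) \<le> norm (2 powr (m / 2) * gd m x)"
      by (intro AE_I2) (use J_bound[of m 0] m in \<open>auto intro: order_trans[OF _ abs_ge_self]\<close>)
  qed
  have cpos: "c > 0" unfolding c_def
  proof (rule int_pos[OF Ji, of 0 1])
    show "0 \<le> J m 0 x" for x by (simp add: J_def)
    show "0 < J m 0 x" for x by (auto simp: J_def T_nz)
  qed simp
  have "((\<lambda>w. (w powr (-m) * Phi m (-w)) / c) \<longlongrightarrow> c / c) at_top"
  proof (rule tendsto_divide[OF _ tendsto_const])
    show "((\<lambda>w. w powr (-m) * Phi m (-w)) \<longlongrightarrow> c) at_top"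
      unfolding c_def
      by (rule Lim_transform_eventually[OF J_lim[OF m]])
         (use eventually_gt_at_top[of 0] in \<open>eventually_elim, simp add: Phi_scale_bot\<close>)
  qed (use cpos in simp)
  then have L: "((\<lambda>w. (w powr (-m) * Phi m (-w)) / c) \<longlongrightarrow> 1) at_top" using cpos by simp
  have "((\<lambda>w. Phi m (-w) / (c * \<bar>-w\<bar> powr m)) \<longlongrightarrow> 1) at_top"
  proof (rule Lim_transform_eventually[OF L])
    show "\<forall>\<^sub>F w in at_top. w powr (-m) * Phi m (-w) / c = Phi m (-w) / (c * \<bar>-w\<bar> powr m)"
      using eventually_gt_at_top[of 0]
    proof eventually_elim
      case (elim w)
      then show ?case using cpos by (simp add: powr_minus field_simps)
    qed
  qed
  then have "((\<lambda>v. Phi m v / (c * \<bar>v\<bar> powr m)) \<longlongrightarrow> 1) at_bot"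
    unfolding filterlim_at_bot_mirror by simp
  with cpos show ?thesis by blast
qed

lemma ratio_bound:
  fixes f g :: "real \<Rightarrow> real"
  assumes "((\<lambda>v. f v / g v) \<longlongrightarrow> 1) F" "eventually (\<lambda>v. g v > 0) F"
  shows "eventually (\<lambda>v. f v \<le> 2 * g v) F"
proof -
  have "eventually (\<lambda>v. f v / g v < 2) F" using order_tendstoD(2)[OF assms(1), of 2] by simp
  with assms(2) show ?thesis
    by eventually_elim (simp add: divide_less_eq)
qed

lemma mirror_lim:
  fixes f :: "real \<Rightarrow> real"
  assumes "((\<lambda>v. f v) \<longlongrightarrow> l) at_bot"
  shows "((\<lambda>v. f (-v)) \<longlongrightarrow> l) at_top"
  using assms unfolding filterlim_at_bot_mirror by simp

lemma mirror_lim':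
  fixes f :: "real \<Rightarrow> real"
  assumes "((\<lambda>v. f v) \<longlongrightarrow> l) at_top"
  shows "((\<lambda>v. f (-v)) \<longlongrightarrow> l) at_bot"
  unfolding filterlim_at_bot_mirror using assms by simp

theorem proposition2p4:
  fixes \<gamma> :: real
  assumes "\<gamma> > 1/2"
  shows "\<exists>\<psi>1 \<psi>2 :: real \<Rightarrow> real.
    smooth_real \<psi>1 \<and> smooth_real \<psi>2 \<and>
    L0_solution \<gamma> \<psi>1 \<and> L0_solution \<gamma> \<psi>2 \<and>
    (\<forall>v. \<psi>1 v > 0) \<and> (\<forall>v. \<psi>2 v > 0) \<and>
    (\<forall>v. \<psi>1 (-v) = \<psi>2 v) \<and>
    (\<forall>\<phi>. L0_solution \<gamma> \<phi> \<longrightarrow> (\<exists>a b. \<forall>v. \<phi> v = a * \<psi>1 v + b * \<psi>2 v)) \<and>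
    (\<forall>a b. (\<forall>v. a * \<psi>1 v + b * \<psi>2 v = 0) \<longrightarrow> a = 0 \<and> b = 0) \<and>
    (\<forall>v. \<psi>1 v * deriv \<psi>2 v - deriv \<psi>1 v * \<psi>2 v = 1) \<and>
    (\<exists>v0 c1 c2 C. v0 > 0 \<and> c1 > 0 \<and> c2 > 0 \<and> C > 0 \<and>
       (\<forall>v. v \<ge> v0 \<longrightarrow> \<psi>1 v \<le> C * \<bar>v\<bar> powr (-\<gamma>)) \<and>
       (\<forall>v. v \<le> -v0 \<longrightarrow> \<psi>1 v \<le> C * \<bar>v\<bar> powr (1 + \<gamma>)) \<and>
       (\<psi>1 \<sim>[at_top] (\<lambda>v. c1 * \<bar>v\<bar> powr (-\<gamma>))) \<and>
       (\<psi>1 \<sim>[at_bot] (\<lambda>v. c2 * \<bar>v\<bar> powr (1 + \<gamma>))) \<and>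
       (\<forall>v. v \<ge> v0 \<longrightarrow> \<psi>2 v \<le> C * \<bar>v\<bar> powr (\<gamma> + 1)) \<and>
       (\<forall>v. v \<le> -v0 \<longrightarrow> \<psi>2 v \<le> C * \<bar>v\<bar> powr (-\<gamma>)) \<and>
       (\<psi>2 \<sim>[at_top] (\<lambda>v. c2 * \<bar>v\<bar> powr (1 + \<gamma>))) \<and>
       (\<psi>2 \<sim>[at_bot] (\<lambda>v. c1 * \<bar>v\<bar> powr (-\<gamma>))))"
proof -
  define m where "m = 1 + \<gamma>"
  have m: "m > 1" using assms by (simp add: m_def)
  have lam: "\<gamma> * (\<gamma> + 1) = m * (m - 1)" by (simp add: m_def algebra_simps)
  define k where "k = sqrt (-2 * Phi m 0 * Phi1 m 0)"
  have kk: "-2 * Phi m 0 * Phi1 m 0 > 0" using Phi_pos[OF m, of 0] Phi1_neg[OF m]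
    by (simp add: mult_pos_neg)
  have k: "k > 0" unfolding k_def using kk by simp
  have k2: "k * k = -2 * Phi m 0 * Phi1 m 0" unfolding k_def using kk by simp
  define p1 where "p1 = (\<lambda>v. Phi m v / k)"
  define p2 where "p2 = (\<lambda>v. Phi m (-v) / k)"
  have Dp1: "(p1 has_real_derivative Phi1 m v / k) (at v)" for v
    unfolding p1_def by (intro DERIV_cdivide D_Phi[OF m])
  have dp1: "deriv p1 = (\<lambda>v. Phi1 m v / k)" using Dp1 by (auto intro!: DERIV_imp_deriv)
  have Ddp1: "((\<lambda>v. Phi1 m v / k) has_real_derivative Phi2 m v / k) (at v)" for v
    by (intro DERIV_cdivide D_Phi1[OF m])
  have ddp1: "deriv (deriv p1) = (\<lambda>v. Phi2 m v / k)" unfolding dp1 using Ddp1 by (auto intro!: DERIV_imp_deriv)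
  have Dp2: "(p2 has_real_derivative - Phi1 m (-v) / k) (at v)" for v
  proof -
    have "((\<lambda>v. Phi m (-v)) has_real_derivative Phi1 m (-v) * (-1)) (at v)"
      by (rule DERIV_chain2[OF D_Phi[OF m]]) (auto intro!: derivative_eq_intros)
    from DERIV_cdivide[OF this, of k] show ?thesis unfolding p2_def by simp
  qed
  have dp2: "deriv p2 = (\<lambda>v. - Phi1 m (-v) / k)" using Dp2 by (auto intro!: DERIV_imp_deriv)
  have Ddp2: "((\<lambda>v. - Phi1 m (-v) / k) has_real_derivative Phi2 m (-v) / k) (at v)" for v
  proof -
    have "((\<lambda>v. Phi1 m (-v)) has_real_derivative Phi2 m (-v) * (-1)) (at v)"
      by (rule DERIV_chain2[OF D_Phi1[OF m]]) (auto intro!: derivative_eq_intros)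
    from DERIV_minus[OF DERIV_cdivide[OF this, of k]] show ?thesis by simp
  qed
  have ddp2: "deriv (deriv p2) = (\<lambda>v. Phi2 m (-v) / k)" unfolding dp2 using Ddp2 by (auto intro!: DERIV_imp_deriv)
  have ode: "Phi2 m v = Wt \<gamma> v * Phi m v" for v
    using ODE_Phi[OF m, of v] T_nz[of v] unfolding Wt_def lam by (simp add: field_simps)
  have Wt_even: "Wt \<gamma> (-v) = Wt \<gamma> v" for v by (simp add: Wt_def)
  have S1: "L0_solution \<gamma> p1"
    unfolding L0_solution_def L0_def ddp1
  proof (intro conjI allI)
    show "p1 differentiable at v" for v using Dp1 real_differentiable_def by blast
    show "deriv p1 differentiable at v" for v unfolding dp1 using Ddp1 real_differentiable_def by blast
    show "- (Phi2 m v / k) + Wt \<gamma> v * p1 v = 0" for v unfolding p1_def ode by simp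
  qed
  have S2: "L0_solution \<gamma> p2"
    unfolding L0_solution_def L0_def ddp2
  proof (intro conjI allI)
    show "p2 differentiable at v" for v using Dp2 real_differentiable_def by blast
    show "deriv p2 differentiable at v" for v unfolding dp2 using Ddp2 real_differentiable_def by blast
    show "- (Phi2 m (-v) / k) + Wt \<gamma> v * p2 v = 0" for v unfolding p2_def ode Wt_even by simp
  qed
  have W: "\<forall>v. p1 v * deriv p2 v - deriv p1 v * p2 v = 1"
  proof
    fix v
    have "p1 v * deriv p2 v - deriv p1 v * p2 v = p1 0 * deriv p2 0 - deriv p1 0 * p2 0"
      by (rule wronsk_const[OF S1 S2])
    also have "\<dots> = (-2 * Phi m 0 * Phi1 m 0) / (k * k)"
      unfolding dp1 dp2 by (simp add: p1_def p2_def field_simps)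
    also have "\<dots> = 1" using k2 Phi_pos[OF m, of 0] Phi1_neg[OF m] by simp
    finally show "p1 v * deriv p2 v - deriv p1 v * p2 v = 1" .
  qed
  obtain c1 where c1: "c1 > 0" "((\<lambda>v. Phi m v / (c1 * \<bar>v\<bar> powr (1 - m))) \<longlongrightarrow> 1) at_top"
    using asym_top[OF m] by blast
  obtain c2 where c2: "c2 > 0" "((\<lambda>v. Phi m v / (c2 * \<bar>v\<bar> powr m)) \<longlongrightarrow> 1) at_bot"
    using asym_bot[OF m] by blast
  have e1m: "1 - m = -\<gamma>" by (simp add: m_def)
  have dc: "(a / k) / (c / k * X) = a / (c * X)" for a c X :: real
    using k by (simp add: divide_divide_eq_left)
  have R1: "((\<lambda>v. p1 v / (c1 / k * \<bar>v\<bar> powr (-\<gamma>))) \<longlongrightarrow> 1) at_top"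
    using c1(2) unfolding p1_def e1m dc .
  have R2: "((\<lambda>v. p1 v / (c2 / k * \<bar>v\<bar> powr (1 + \<gamma>))) \<longlongrightarrow> 1) at_bot"
    using c2(2) unfolding p1_def m_def dc .
  have R3: "((\<lambda>v. p2 v / (c2 / k * \<bar>v\<bar> powr (1 + \<gamma>))) \<longlongrightarrow> 1) at_top"
    using mirror_lim[OF R2] unfolding p1_def p2_def by simp
  have R4: "((\<lambda>v. p2 v / (c1 / k * \<bar>v\<bar> powr (-\<gamma>))) \<longlongrightarrow> 1) at_bot"
    using mirror_lim'[OF R1] unfolding p1_def p2_def by simp
  have c1k: "c1 / k > 0" using c1 k by simp
  have c2k: "c2 / k > 0" using c2 k by simp
  have Et: "eventually (\<lambda>v::real. d * \<bar>v\<bar> powr a > 0) at_top" if "d > 0" for d a :: real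
    by (rule eventually_at_top_linorderI[of 1]) (use that in auto)
  have Eb: "eventually (\<lambda>v::real. d * \<bar>v\<bar> powr a > 0) at_bot" if "d > 0" for d a :: real
    by (rule eventually_at_bot_linorderI[of "-1"]) (use that in auto)
  obtain N1 where N1: "\<And>v. v \<ge> N1 \<Longrightarrow> p1 v \<le> 2 * (c1 / k * \<bar>v\<bar> powr (-\<gamma>))"
    using ratio_bound[OF R1 Et[OF c1k]] unfolding eventually_at_top_linorder by blast
  obtain N2 where N2: "\<And>v. v \<le> N2 \<Longrightarrow> p1 v \<le> 2 * (c2 / k * \<bar>v\<bar> powr (1 + \<gamma>))"
    using ratio_bound[OF R2 Eb[OF c2k]] unfolding eventually_at_bot_linorder by blast
  define v0 where "v0 = max 1 (max N1 (-N2))"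
  define C where "C = 2 * max (c1 / k) (c2 / k)"
  have v0: "v0 > 0" unfolding v0_def by simp
  have C: "C > 0" unfolding C_def using c1k by simp
  have B1: "p1 v \<le> C * \<bar>v\<bar> powr (-\<gamma>)" if "v \<ge> v0" for v
  proof -
    have "v \<ge> N1" using that unfolding v0_def by auto
    then have "p1 v \<le> 2 * (c1 / k * \<bar>v\<bar> powr (-\<gamma>))" by (rule N1)
    also have "\<dots> = (2 * (c1 / k)) * \<bar>v\<bar> powr (-\<gamma>)" by (simp only: mult.assoc)
    also have "\<dots> \<le> C * \<bar>v\<bar> powr (-\<gamma>)" unfolding C_def by (intro mult_right_mono) auto
    finally show ?thesis by simp
  qed
  have B2: "p1 v \<le> C * \<bar>v\<bar> powr (1 + \<gamma>)" if "v \<le> -v0" for v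
  proof -
    have "v \<le> N2" using that unfolding v0_def by auto
    then have "p1 v \<le> 2 * (c2 / k * \<bar>v\<bar> powr (1 + \<gamma>))" by (rule N2)
    also have "\<dots> = (2 * (c2 / k)) * \<bar>v\<bar> powr (1 + \<gamma>)" by (simp only: mult.assoc)
    also have "\<dots> \<le> C * \<bar>v\<bar> powr (1 + \<gamma>)" unfolding C_def by (intro mult_right_mono) auto
    finally show ?thesis by simp
  qed
  have p12: "\<forall>v. p1 (-v) = p2 v" unfolding p1_def p2_def by simp
  show ?thesis
  proof (rule exI[of _ p1], rule exI[of _ p2], intro conjI)
    show "smooth_real p1" by (rule sol_smooth[OF S1])
    show "smooth_real p2" by (rule sol_smooth[OF S2])
    show "L0_solution \<gamma> p1" by (rule S1)
    show "L0_solution \<gamma> p2" by (rule S2)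
    show "\<forall>v. p1 v > 0" unfolding p1_def using Phi_pos[OF m] k by simp
    show "\<forall>v. p2 v > 0" unfolding p2_def using Phi_pos[OF m] k by simp
    show "\<forall>v. p1 (-v) = p2 v" by (rule p12)
    show "\<forall>\<phi>. L0_solution \<gamma> \<phi> \<longrightarrow> (\<exists>a b. \<forall>v. \<phi> v = a * p1 v + b * p2 v)"
      using basis[OF S1 S2 _ W] by blast
    show "\<forall>a b. (\<forall>v. a * p1 v + b * p2 v = 0) \<longrightarrow> a = 0 \<and> b = 0"
      using indep[OF S1 S2 W] by blast
    show "\<forall>v. p1 v * deriv p2 v - deriv p1 v * p2 v = 1" by (rule W)
    show "\<exists>v0 c1 c2 C. v0 > 0 \<and> c1 > 0 \<and> c2 > 0 \<and> C > 0 \<and>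
       (\<forall>v. v \<ge> v0 \<longrightarrow> p1 v \<le> C * \<bar>v\<bar> powr (-\<gamma>)) \<and>
       (\<forall>v. v \<le> -v0 \<longrightarrow> p1 v \<le> C * \<bar>v\<bar> powr (1 + \<gamma>)) \<and>
       (p1 \<sim>[at_top] (\<lambda>v. c1 * \<bar>v\<bar> powr (-\<gamma>))) \<and>
       (p1 \<sim>[at_bot] (\<lambda>v. c2 * \<bar>v\<bar> powr (1 + \<gamma>))) \<and>
       (\<forall>v. v \<ge> v0 \<longrightarrow> p2 v \<le> C * \<bar>v\<bar> powr (\<gamma> + 1)) \<and>
       (\<forall>v. v \<le> -v0 \<longrightarrow> p2 v \<le> C * \<bar>v\<bar> powr (-\<gamma>)) \<and>
       (p2 \<sim>[at_top] (\<lambda>v. c2 * \<bar>v\<bar> powr (1 + \<gamma>))) \<and>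
       (p2 \<sim>[at_bot] (\<lambda>v. c1 * \<bar>v\<bar> powr (-\<gamma>)))"
    proof (rule exI[of _ v0], rule exI[of _ "c1 / k"], rule exI[of _ "c2 / k"], rule exI[of _ C], intro conjI)
      show "v0 > 0" "c1 / k > 0" "c2 / k > 0" "C > 0" by (fact v0 c1k c2k C)+
      show "\<forall>v. v \<ge> v0 \<longrightarrow> p1 v \<le> C * \<bar>v\<bar> powr (-\<gamma>)" using B1 by blast
      show "\<forall>v. v \<le> -v0 \<longrightarrow> p1 v \<le> C * \<bar>v\<bar> powr (1 + \<gamma>)" using B2 by blast
      show "\<forall>v. v \<ge> v0 \<longrightarrow> p2 v \<le> C * \<bar>v\<bar> powr (\<gamma> + 1)"
      proof (intro allI impI)
        fix v :: real assume "v \<ge> v0"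
        then have "p1 (-v) \<le> C * \<bar>-v\<bar> powr (1 + \<gamma>)" by (intro B2) simp
        then show "p2 v \<le> C * \<bar>v\<bar> powr (\<gamma> + 1)" using p12 by (simp add: add.commute)
      qed
      show "\<forall>v. v \<le> -v0 \<longrightarrow> p2 v \<le> C * \<bar>v\<bar> powr (-\<gamma>)"
      proof (intro allI impI)
        fix v :: real assume "v \<le> -v0"
        then have "p1 (-v) \<le> C * \<bar>-v\<bar> powr (-\<gamma>)" by (intro B1) simp
        then show "p2 v \<le> C * \<bar>v\<bar> powr (-\<gamma>)" using p12 by simp
      qed
      show "p1 \<sim>[at_top] (\<lambda>v. c1 / k * \<bar>v\<bar> powr (-\<gamma>))" by (rule asymp_equivI'[OF R1])
      show "p1 \<sim>[at_bot] (\<lambda>v. c2 / k * \<bar>v\<bar> powr (1 + \<gamma>))" by (rule asymp_equivI'[OF R2])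
      show "p2 \<sim>[at_top] (\<lambda>v. c2 / k * \<bar>v\<bar> powr (1 + \<gamma>))" by (rule asymp_equivI'[OF R3])
      show "p2 \<sim>[at_bot] (\<lambda>v. c1 / k * \<bar>v\<bar> powr (-\<gamma>))" by (rule asymp_equivI'[OF R4])
    qed
  qed
qed

end
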